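(* Let $N\ge 2$ be an integer. For $k\in\mathbb{Z}$ and arguments $(u,v)$ let $C_k(u,v)\in\mathbb{C}[y,z]^N$ be the column vector whose $i$-th entry ($i=1,\dots,N$, counted from the top) is $p_{k+2(N-i)}(u,v)$. Then (a) $\det\big[C_{-N+2}(y,z),C_{-N+3}(y,z),\dots,C_0(y,z),C_1(y,z)\big]=\phi_N(y,z)$; (b) $\det\big[C_{-N+2}(y/q,z),C_{-N+3}(y,z),\dots,C_1(y,z)\big]=\phi_N(y/q,z)$; (c) $\det\big[C_{-N+2}(y,z/q),C_{-N+3}(y,z),\dots,C_1(y,z)\big]=\phi_N(y,z/q)$; (d) $\det\big[C_{-N+3}(y/q,z),C_{-N+3}(y,z),C_{-N+4}(y,z),\dots,C_1(y,z)\big]=(1-q)\frac{y}{q}\,\phi_N(y/q,z)$; (e) $\det\big[C_{-N+3}(y,z/q),C_{-N+3}(y,z),C_{-N+4}(y,z),\dots,C_1(y,z)\big]=(1-q)\frac{z}{q}\,\phi_N(y,z/q)$; (f) $\det\big[C_{-N+3}(y,z/q),C_{-N+3}(y/q,z),C_{-N+4}(y,z),\dots,C_1(y,z)\big]=\frac{1-q}{q}(z-y)\,\phi_N(y/q,z/q)$. In (b),(c) the $j$-th column for $2\le j\le N$ is $C_{-N+j+1}(y,z)$; in (d),(e) likewise for $2\le j\le N$; in (f) the $j$-th column for $3\le j\le N$ is $C_{-N+j+1}(y,z)$.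
   Context: $q$ is a fixed nonzero complex constant that is not a root of unity; $y,z$ are variables. For $k\in\mathbb{Z}$ the polynomials $p_k(y,z)$ are defined by the generating function $\sum_{n\ge 0}p_n(y,z)t^n=\frac{(-(1-q)t;q)_\infty}{((1-q)yt;q)_\infty((1-q)zt;q)_\infty}$, with $(a;q)_\infty=\prod_{i\ge0}(1-aq^i)$, and $p_k=0$ for $k<0$; equivalently $p_n(y,z)=(1-q)^n\sum_{a+b+c=n}\frac{y^a z^b q^{c(c-1)/2}}{(q;q)_a(q;q)_b(q;q)_c}$ with $(q;q)_m=\prod_{j=1}^m(1-q^j)$. For $N>0$, $\phi_N(y,z)=\det\big(p_{N-2i+j+1}(y,z)\big)_{i,j=1}^N$. *)

theory Defs
  imports Complex_Main "Jordan_Normal_Form.Determinant"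
begin

definition qpoch :: "complex \<Rightarrow> nat \<Rightarrow> complex" where
  "qpoch q m = (\<Prod>j=1..m. 1 - q ^ j)"

definition pp :: "complex \<Rightarrow> int \<Rightarrow> complex \<Rightarrow> complex \<Rightarrow> complex" where
  "pp q k y z = (if k < 0 then 0 else
     (let n = nat k in (1 - q) ^ n *
       (\<Sum>(a, b, c) \<in> {(a, b, c). a + b + c = n}.
          y ^ a * z ^ b * q ^ (c * (c - 1) div 2) / (qpoch q a * qpoch q b * qpoch q c))))"

text \<open>phi_N(y,z) = det (p_{N-2i+j+1}(y,z))_{i,j=1..N}; here with 0-based indices i,j < N,
  so the entry is p_{N - 2(i+1) + (j+1) + 1}.\<close>
definition phi :: "complex \<Rightarrow> nat \<Rightarrow> complex \<Rightarrow> complex \<Rightarrow> complex" where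
  "phi q N y z = det (mat N N (\<lambda>(i, j).
      pp q (int N - 2 * (int i + 1) + (int j + 1) + 1) y z))"

text \<open>Column vector C_k(u,v): its (1-based) i-th entry is p_{k+2(N-i)}(u,v);
  here 0-based row index i < N, i.e. entry p_{k + 2(N - (i+1))}(u,v).\<close>
definition Ccol :: "complex \<Rightarrow> nat \<Rightarrow> int \<Rightarrow> complex \<Rightarrow> complex \<Rightarrow> nat \<Rightarrow> complex" where
  "Ccol q N k u v i = pp q (k + 2 * (int N - (int i + 1))) u v"

definition detcols :: "nat \<Rightarrow> (nat \<Rightarrow> nat \<Rightarrow> complex) \<Rightarrow> complex" where
  "detcols N cf = det (mat N N (\<lambda>(i, j). cf j i))"

text \<open>The standard column in (1-based) position j is C_{-N+j+1}(y,z);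
  with 0-based position j this is C_{-N+j+2}(y,z).\<close>
definition stdcol :: "complex \<Rightarrow> nat \<Rightarrow> complex \<Rightarrow> complex \<Rightarrow> nat \<Rightarrow> nat \<Rightarrow> complex" where
  "stdcol q N y z j = Ccol q N (- int N + int j + 2) y z"

end

theory Submission
  imports Defs
begin

definition R :: "nat \<Rightarrow> (nat \<Rightarrow> nat \<Rightarrow> complex) \<Rightarrow> complex mat" where
  "R N cf = mat N N (\<lambda>(i, j). cf i j)"

lemma detcols_R: "detcols N cf = det (R N cf)"
proof -
  have "mat N N (\<lambda>(i, j). cf j i) = transpose_mat (R N cf)"
    by (rule eq_matI) (auto simp: R_def)
  thus ?thesis unfolding detcols_def by (metis det_transpose mat_carrier R_def)
qed

lemma detcols_cong:
  assumes "\<And>i j. i < N \<Longrightarrow> j < N \<Longrightarrow> cf j i = cg j i"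
  shows "detcols N cf = detcols N cg"
proof -
  have "mat N N (\<lambda>(i, j). cf j i) = mat N N (\<lambda>(i, j). cg j i)"
    by (rule eq_matI) (auto simp: assms)
  thus ?thesis unfolding detcols_def by simp
qed

lemma detcols_add:
  assumes "j < N" "l < N" "j \<noteq> l" "cf j = (\<lambda>i. v i + a * cf l i)"
  shows "detcols N cf = detcols N (cf(j := v))"
proof -
  have "R N cf = addrow a j l (R N (cf(j := v)))"
    by (rule eq_matI) (use assms in \<open>auto simp: R_def\<close>)
  thus ?thesis unfolding detcols_R using assms
    by (simp add: det_addrow R_def)
qed

lemma detcols_mult:
  assumes "j < N" "cf j = (\<lambda>i. a * v i)"
  shows "detcols N cf = a * detcols N (cf(j := v))"
proof -
  have "R N cf = multrow j a (R N (cf(j := v)))"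
    by (rule eq_matI) (use assms in \<open>auto simp: R_def\<close>)
  thus ?thesis unfolding detcols_R using assms
    by (simp add: det_multrow R_def)
qed

lemma detcols_swap:
  assumes "j < N" "l < N" "j \<noteq> l"
  shows "detcols N cf = - detcols N (cf(j := cf l, l := cf j))"
proof -
  have "R N cf = swaprows j l (R N (cf(j := cf l, l := cf j)))"
    by (rule eq_matI) (use assms in \<open>auto simp: R_def\<close>)
  thus ?thesis unfolding detcols_R using assms
    by (simp add: det_swaprows R_def)
qed

definition E :: "complex \<Rightarrow> nat \<Rightarrow> complex \<Rightarrow> complex" where
  "E q m z = (\<Sum>b\<le>m. z ^ b * q ^ ((m - b) * (m - b - 1) div 2) / (qpoch q b * qpoch q (m - b)))"

definition S :: "complex \<Rightarrow> nat \<Rightarrow> complex \<Rightarrow> complex \<Rightarrow> complex" where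
  "S q n y z = (\<Sum>a\<le>n. y ^ a / qpoch q a * E q (n - a) z)"

lemma set_sum_S:
  "(\<Sum>(a, b, c) \<in> {(a, b, c). a + b + c = n}.
          y ^ a * z ^ b * q ^ (c * (c - 1) div 2) / (qpoch q a * qpoch q b * qpoch q c)) = S q n y z"
proof -
  let ?T = "\<lambda>(a::nat, b::nat, c::nat). y ^ a * z ^ b * q ^ (c * (c - 1) div 2) / (qpoch q a * qpoch q b * qpoch q c)"
  let ?h = "\<lambda>(a::nat, b::nat). (a, b, n - a - b)"
  have img: "{(a, b, c). a + b + c = n} = ?h ` (SIGMA a:{..n}. {..n-a})"
  proof
    show "{(a, b, c). a + b + c = n} \<subseteq> ?h ` (SIGMA a:{..n}. {..n-a})"
    proof
      fix x assume "x \<in> {(a, b, c). a + b + c = n}"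
      then obtain a b c where x: "x = (a, b, c)" "a + b + c = n" by auto
      hence "x = ?h (a, b)" by auto
      moreover have "(a, b) \<in> (SIGMA a:{..n}. {..n-a})" using x by auto
      ultimately show "x \<in> ?h ` (SIGMA a:{..n}. {..n-a})" by blast
    qed
  qed auto
  have inj: "inj_on ?h (SIGMA a:{..n}. {..n-a})" by (auto simp: inj_on_def)
  have "sum ?T {(a, b, c). a + b + c = n} = sum (?T \<circ> ?h) (SIGMA a:{..n}. {..n-a})"
    unfolding img by (rule sum.reindex[OF inj])
  also have "\<dots> = (\<Sum>(a,b)\<in>(SIGMA a:{..n}. {..n-a}). y ^ a / qpoch q a * (z ^ b * q ^ ((n - a - b) * (n - a - b - 1) div 2) / (qpoch q b * qpoch q (n - a - b))))"
    by (rule sum.cong) (auto simp: mult.assoc)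
  also have "\<dots> = (\<Sum>a\<le>n. \<Sum>b\<le>n-a. y ^ a / qpoch q a * (z ^ b * q ^ ((n - a - b) * (n - a - b - 1) div 2) / (qpoch q b * qpoch q (n - a - b))))"
    by (rule sum.Sigma[symmetric]) auto
  also have "\<dots> = S q n y z"
    unfolding S_def E_def by (simp add: sum_distrib_left diff_diff_add)
  finally show ?thesis .
qed

lemma qpoch_Suc: "qpoch q (Suc a) = qpoch q a * (1 - q ^ Suc a)"
  unfolding qpoch_def by (simp add: prod.nat_ivl_Suc')

lemma S_rec:
  assumes nr: "\<forall>n::nat. n > 0 \<longrightarrow> q ^ n \<noteq> 1"
  shows "S q (Suc n) (q * y) z = S q (Suc n) y z - y * S q n y z"
proof -
  have key: "(q * y) ^ Suc a / qpoch q (Suc a) = y ^ Suc a / qpoch q (Suc a) - y * (y ^ a / qpoch q a)" for a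
  proof -
    have ne: "1 - q ^ Suc a \<noteq> 0" using nr by (metis eq_iff_diff_eq_0 zero_less_Suc)
    show ?thesis unfolding qpoch_Suc using ne
      by (cases "qpoch q a = 0") (simp_all add: field_simps power_mult_distrib)
  qed
  have "S q (Suc n) (q * y) z = E q (Suc n) z + (\<Sum>a\<le>n. (q * y) ^ Suc a / qpoch q (Suc a) * E q (n - a) z)"
    unfolding S_def by (subst sum.atMost_Suc_shift) (simp add: qpoch_def)
  also have "\<dots> = E q (Suc n) z + (\<Sum>a\<le>n. y ^ Suc a / qpoch q (Suc a) * E q (n - a) z) - y * S q n y z"
    unfolding key S_def by (simp add: sum_distrib_left algebra_simps sum_subtractf)
  also have "E q (Suc n) z + (\<Sum>a\<le>n. y ^ Suc a / qpoch q (Suc a) * E q (n - a) z) = S q (Suc n) y z"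
    unfolding S_def by (subst sum.atMost_Suc_shift) (simp add: qpoch_def)
  finally show ?thesis .
qed

lemma pp_S: "pp q k y z = (if k < 0 then 0 else (1 - q) ^ nat k * S q (nat k) y z)"
  unfolding pp_def Let_def set_sum_S ..

lemma pp_rec_y:
  assumes nr: "\<forall>n::nat. n > 0 \<longrightarrow> q ^ n \<noteq> 1" and q0: "q \<noteq> 0"
  shows "pp q k y z = pp q k (y / q) z - (1 - q) * (y / q) * pp q (k - 1) (y / q) z"
proof -
  define Y where "Y = y / q"
  have y: "y = q * Y" using q0 by (simp add: Y_def)
  consider "k < 0" | "k = 0" | "k > 0" by linarith
  then show ?thesis
  proof cases
    case 1 thus ?thesis by (simp add: pp_S)
  next
    case 2 thus ?thesis by (simp add: pp_S S_def)
  next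
    case 3
    obtain n where n: "nat k = Suc n" using 3 by (cases "nat k") auto
    have n2: "nat (k - 1) = n" using n by linarith
    have "pp q k y z = (1 - q) ^ Suc n * S q (Suc n) (q * Y) z" 
      using 3 unfolding y pp_S n by simp
    also have "\<dots> = (1 - q) ^ Suc n * S q (Suc n) Y z - (1 - q) * Y * ((1 - q) ^ n * S q n Y z)"
      unfolding S_rec[OF nr] by (simp only: power_Suc algebra_simps)
    also have "\<dots> = pp q k Y z - (1 - q) * Y * pp q (k - 1) Y z"
      using 3 unfolding pp_S n n2 by simp
    finally show ?thesis unfolding Y_def .
  qed
qed

lemma pp_sym: "pp q k y z = pp q k z y"
proof -
  have sw: "(\<Sum>(a, b, c) \<in> {(a, b, c). a + b + c = n}.
          y ^ a * z ^ b * q ^ (c * (c - 1) div 2) / (qpoch q a * qpoch q b * qpoch q c))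
      = (\<Sum>(a, b, c) \<in> {(a, b, c). a + b + c = n}.
          z ^ a * y ^ b * q ^ (c * (c - 1) div 2) / (qpoch q a * qpoch q b * qpoch q c))" for n :: nat
  proof (rule sum.reindex_bij_witness[where i="\<lambda>(a,b,c). (b,a,c)" and j="\<lambda>(a,b,c). (b,a,c)"], goal_cases)
    case (1 x) thus ?case by (auto split: prod.splits)
  next
    case (2 x) thus ?case by (auto split: prod.splits)
  next
    case (3 x) thus ?case by (auto split: prod.splits)
  next
    case (4 x) thus ?case by (auto split: prod.splits)
  next
    case (5 x)
    obtain a b c where x: "x = (a, b, c)" by (metis prod_cases3)
    have "z ^ b * y ^ a * q ^ (c * (c - 1) div 2) / (qpoch q b * qpoch q a * qpoch q c)
        = y ^ a * z ^ b * q ^ (c * (c - 1) div 2) / (qpoch q a * qpoch q b * qpoch q c)"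
      by (simp only: mult.commute mult.left_commute)
    thus ?case unfolding x by (simp only: prod.case)
  qed
  show ?thesis unfolding pp_def Let_def sw by (rule refl)
qed

lemma pp_rec_z:
  assumes nr: "\<forall>n::nat. n > 0 \<longrightarrow> q ^ n \<noteq> 1" and q0: "q \<noteq> 0"
  shows "pp q k y z = pp q k y (z / q) - (1 - q) * (z / q) * pp q (k - 1) y (z / q)"
  using pp_rec_y[OF assms, of k z y] pp_sym[of q k y z] pp_sym[of q k y "z/q"] pp_sym[of q "k-1" y "z/q"]
  by (simp only:)

lemma stdcol_eq: "stdcol q N y z j i = pp q (int N + int j - 2 * int i) y z"
  unfolding stdcol_def Ccol_def by (simp add: algebra_simps)

lemma Ccol_eq: "Ccol q N k u v i = pp q (k + 2 * int N - 2 * int i - 2) u v"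
  unfolding Ccol_def by (simp add: algebra_simps)

lemma phi_eq: "phi q N y z = detcols N (stdcol q N y z)"
  unfolding phi_def detcols_def
  by (rule arg_cong[where f=det], rule eq_matI) (auto simp: stdcol_eq algebra_simps)

lemma reduce:
  assumes m1: "1 \<le> m" and m2: "\<beta> \<noteq> 0 \<longrightarrow> 2 \<le> m"
    and lo: "\<And>j. j < m \<Longrightarrow> cf j = P j"
    and hi: "\<And>j. m \<le> j \<Longrightarrow> j < N \<Longrightarrow> cf j = (\<lambda>i. P j i + \<alpha> * P (j - 1) i + \<beta> * P (j - 2) i)"
  shows "detcols N cf = detcols N P"
proof -
  have "detcols N cf = detcols N (\<lambda>j. if j < m + k then P j else cf j)" for k
  proof (induction k)
    case 0
    have "(\<lambda>j. if j < m + 0 then P j else cf j) = cf" using lo by auto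
    thus ?case by simp
  next
    case (Suc k)
    define G where "G = (\<lambda>j. if j < m + k then P j else cf j)"
    define j0 where "j0 = m + k"
    show ?case
    proof (cases "j0 < N")
      case False
      have "detcols N G = detcols N (\<lambda>j. if j < m + Suc k then P j else cf j)"
        by (rule detcols_cong) (use False in \<open>auto simp: G_def j0_def\<close>)
      thus ?thesis using Suc.IH G_def by simp
    next
      case True
      note jN = True
      define H where "H = G(j0 := (\<lambda>i. P j0 i + \<alpha> * P (j0 - 1) i))"
      have GH: "detcols N G = detcols N H"
      proof (cases "\<beta> = 0")
        case True
        have "G = H" unfolding H_def G_def j0_def
          by (rule ext) (use True hi jN j0_def in \<open>auto\<close>)
        thus ?thesis by simp
      next
        case False
        hence j02: "2 \<le> j0" using m2 j0_def by auto
        have "G j0 = (\<lambda>i. H j0 i + \<beta> * G (j0 - 2) i)"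
          unfolding H_def G_def j0_def using hi[of "m+k"] jN j0_def j02 by auto
        hence "detcols N G = detcols N (G(j0 := H j0))"
          by (rule detcols_add[rotated 3]) (use jN j02 in auto)
        also have "G(j0 := H j0) = H" unfolding H_def by simp
        finally show ?thesis .
      qed
      have "H j0 = (\<lambda>i. P j0 i + \<alpha> * H (j0 - 1) i)"
        unfolding H_def G_def j0_def using m1 by auto
      hence "detcols N H = detcols N (H(j0 := P j0))"
        by (rule detcols_add[rotated 3]) (use jN m1 j0_def in auto)
      also have "H(j0 := P j0) = (\<lambda>j. if j < m + Suc k then P j else cf j)"
        unfolding H_def G_def j0_def by auto
      finally show ?thesis using GH Suc.IH G_def by simp
    qed
  qed
  from this[of N] have "detcols N cf = detcols N (\<lambda>j. if j < m + N then P j else cf j)" .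
  also have "\<dots> = detcols N P" by (rule detcols_cong) auto
  finally show ?thesis .
qed

lemma shape_de:
  assumes N2: "2 \<le> N" and c0: "cf 0 = P 1" and c1: "cf 1 = (\<lambda>i. P 1 i + a * P 0 i)"
    and hi: "\<And>j. 2 \<le> j \<Longrightarrow> j < N \<Longrightarrow> cf j = (\<lambda>i. P j i + a * P (j - 1) i)"
  shows "detcols N cf = - a * detcols N P"
proof -
  have "cf 1 = (\<lambda>i. a * P 0 i + 1 * cf 0 i)" using c0 c1 by (auto simp: algebra_simps)
  hence "detcols N cf = detcols N (cf(1 := (\<lambda>i. a * P 0 i)))"
    by (rule detcols_add[rotated 3]) (use N2 in auto)
  also have "\<dots> = a * detcols N (cf(1 := P 0))"
    by (subst detcols_mult[where j=1 and a=a and v="P 0"]) (use N2 in auto)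
  also have "detcols N (cf(1 := P 0)) = - detcols N ((cf(1 := P 0))(0 := P 0, 1 := P 1))"
    using detcols_swap[of 0 N 1 "cf(1 := P 0)"] N2 c0 by simp
  also have "detcols N ((cf(1 := P 0))(0 := P 0, 1 := P 1)) = detcols N P"
    by (rule reduce[where m=2 and \<beta>=0 and \<alpha>=a]) (use hi in \<open>auto simp: less_2_cases_iff\<close>)
  finally show ?thesis by simp
qed

lemma shape_f:
  assumes N2: "2 \<le> N" and c0: "cf 0 = (\<lambda>i. P 1 i + a * P 0 i)" and c1: "cf 1 = (\<lambda>i. P 1 i + b * P 0 i)"
    and hi: "\<And>j. 2 \<le> j \<Longrightarrow> j < N \<Longrightarrow> cf j = (\<lambda>i. P j i + (a + b) * P (j - 1) i + (a * b) * P (j - 2) i)"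
  shows "detcols N cf = (a - b) * detcols N P"
proof -
  have "cf 1 = (\<lambda>i. (b - a) * P 0 i + 1 * cf 0 i)" using c0 c1 by (auto simp: algebra_simps)
  hence "detcols N cf = detcols N (cf(1 := (\<lambda>i. (b - a) * P 0 i)))"
    by (rule detcols_add[rotated 3]) (use N2 in auto)
  also have "\<dots> = (b - a) * detcols N (cf(1 := P 0))"
    by (subst detcols_mult[where j=1 and a="b - a" and v="P 0"]) (use N2 in auto)
  also have "detcols N (cf(1 := P 0)) = detcols N (cf(1 := P 0, 0 := P 1))"
    by (rule detcols_add[where l=1 and a=a]) (use N2 c0 in auto)
  also have "\<dots> = - detcols N (cf(1 := P 0, 0 := P 1, 0 := P 0, 1 := P 1))"
    using detcols_swap[of 0 N 1 "cf(1 := P 0, 0 := P 1)"] N2 by simp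
  also have "detcols N (cf(1 := P 0, 0 := P 1, 0 := P 0, 1 := P 1)) = detcols N P"
  proof (cases "a * b = 0")
    case True
    show ?thesis
      by (rule reduce[where m=2 and \<beta>=0 and \<alpha>="a + b"]) (use hi True in \<open>auto simp: less_2_cases_iff\<close>)
  next
    case False
    show ?thesis
      by (rule reduce[where m=2 and \<beta>="a * b" and \<alpha>="a + b"]) (use hi in \<open>auto simp: less_2_cases_iff\<close>)
  qed
  finally show ?thesis by (simp add: algebra_simps)
qed

theorem lemma1:
  fixes q y z :: complex and N :: nat
  assumes q_nz: "q \<noteq> 0"
    and q_not_root: "\<forall>n::nat. n > 0 \<longrightarrow> q ^ n \<noteq> 1"
    and N_ge: "N \<ge> 2"
  shows "(detcols N (stdcol q N y z) = phi q N y z)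
    \<and> (detcols N ((stdcol q N y z)(0 := Ccol q N (- int N + 2) (y / q) z)) = phi q N (y / q) z)
    \<and> (detcols N ((stdcol q N y z)(0 := Ccol q N (- int N + 2) y (z / q))) = phi q N y (z / q))
    \<and> (detcols N ((stdcol q N y z)(0 := Ccol q N (- int N + 3) (y / q) z))
             = (1 - q) * (y / q) * phi q N (y / q) z)
    \<and> (detcols N ((stdcol q N y z)(0 := Ccol q N (- int N + 3) y (z / q)))
             = (1 - q) * (z / q) * phi q N y (z / q))
    \<and> (detcols N ((stdcol q N y z)(0 := Ccol q N (- int N + 3) y (z / q),
                                       1 := Ccol q N (- int N + 3) (y / q) z))
             = (1 - q) / q * (z - y) * phi q N (y / q) (z / q))"
proof -
  note ry = pp_rec_y[OF q_not_root q_nz]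
  note rz = pp_rec_z[OF q_not_root q_nz]
  define ay where "ay = - ((1 - q) * (y / q))"
  define az where "az = - ((1 - q) * (z / q))"
  have sy: "stdcol q N y w j = (\<lambda>i. stdcol q N (y/q) w j i + ay * stdcol q N (y/q) w (j - 1) i)"
    if "1 \<le> j" for w j
  proof (rule ext)
    fix i
    have e: "int N + int (j - 1) - 2 * int i = int N + int j - 2 * int i - 1" using that by simp
    show "stdcol q N y w j i = stdcol q N (y/q) w j i + ay * stdcol q N (y/q) w (j - 1) i"
      unfolding stdcol_eq e by (rule ry[THEN trans]) (simp only: ay_def mult_minus_left diff_conv_add_uminus)
  qed
  have sz: "stdcol q N w z j = (\<lambda>i. stdcol q N w (z/q) j i + az * stdcol q N w (z/q) (j - 1) i)"
    if "1 \<le> j" for w j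
  proof (rule ext)
    fix i
    have e: "int N + int (j - 1) - 2 * int i = int N + int j - 2 * int i - 1" using that by simp
    show "stdcol q N w z j i = stdcol q N w (z/q) j i + az * stdcol q N w (z/q) (j - 1) i"
      unfolding stdcol_eq e by (rule rz[THEN trans]) (simp only: az_def mult_minus_left diff_conv_add_uminus)
  qed
  have C2: "Ccol q N (- int N + 2) u v = stdcol q N u v 0" for u v
    by (rule ext) (simp add: Ccol_eq stdcol_eq algebra_simps)
  have C3: "Ccol q N (- int N + 3) u v = stdcol q N u v 1" for u v
    by (rule ext) (simp add: Ccol_eq stdcol_eq algebra_simps)
  have A: "detcols N (stdcol q N y z) = phi q N y z" by (simp add: phi_eq)
  have B: "detcols N ((stdcol q N y z)(0 := Ccol q N (- int N + 2) (y / q) z)) = phi q N (y / q) z"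
    unfolding phi_eq C2
    by (rule reduce[where m=1 and \<beta>=0 and \<alpha>=ay]) (auto simp: sy)
  have C: "detcols N ((stdcol q N y z)(0 := Ccol q N (- int N + 2) y (z / q))) = phi q N y (z / q)"
    unfolding phi_eq C2
    by (rule reduce[where m=1 and \<beta>=0 and \<alpha>=az]) (auto simp: sz)
  have D: "detcols N ((stdcol q N y z)(0 := Ccol q N (- int N + 3) (y / q) z))
             = (1 - q) * (y / q) * phi q N (y / q) z"
    unfolding phi_eq C3
    by (subst shape_de[where a=ay and P="stdcol q N (y/q) z"])
       (use N_ge sy[of 1 z] sy[of _ z] in \<open>auto simp: ay_def\<close>)
  have E: "detcols N ((stdcol q N y z)(0 := Ccol q N (- int N + 3) y (z / q)))
             = (1 - q) * (z / q) * phi q N y (z / q)"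
    unfolding phi_eq C3
    by (subst shape_de[where a=az and P="stdcol q N y (z/q)"])
       (use N_ge sz[of 1 y] sz[of _ y] in \<open>auto simp: az_def\<close>)
  have hiF: "stdcol q N y z j = (\<lambda>i. stdcol q N (y/q) (z/q) j i + (ay + az) * stdcol q N (y/q) (z/q) (j - 1) i
      + (ay * az) * stdcol q N (y/q) (z/q) (j - 2) i)" if "2 \<le> j" for j
  proof -
    have "j - 1 - 1 = j - 2" by simp
    thus ?thesis using sy[of j z] sz[of j "y/q"] sz[of "j - 1" "y/q"] that
      by (auto simp: algebra_simps)
  qed
  have F: "detcols N ((stdcol q N y z)(0 := Ccol q N (- int N + 3) y (z / q),
                                       1 := Ccol q N (- int N + 3) (y / q) z))
             = (1 - q) / q * (z - y) * phi q N (y / q) (z / q)"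
  proof -
    have co: "ay - az = (1 - q) / q * (z - y)" using q_nz by (simp add: ay_def az_def field_simps)
    show ?thesis unfolding phi_eq C3 co[symmetric]
      by (rule shape_f) (use N_ge sy[of 1 "z/q"] sz[of 1 "y/q"] hiF in auto)
  qed
  show ?thesis using A B C D E F by blast
qed

end
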